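(* Let $t$, $l$, $n$ be positive integers with $l < t$, and let $y = \left[\frac{t(n-l+1)-l}{t-l}\right]$. Let $\epsilon = 1$ if $y$ is odd and $\epsilon = 0$ otherwise. Then $R_{t-l,t}(K_{1,n}) > y - \epsilon$.
   Context: $[a]$ denotes the integer part (floor) of a real number $a$. $K_{1,n}$ is the star with $n$ edges. For a graph $G$ and integers $1 \leq s < t$, $R_{s,t}(G)$ is the smallest positive integer $N$ such that every coloring of the edges of the complete graph $K_N$ with $t$ colors contains a (not necessarily induced) subgraph isomorphic to $G$ whose edges use at most $s$ distinct colors. *)

theory Defs
  imports Main Complex_Main
begin

text \<open>A graph G is given by a vertex set V and an edge set E (each edge a 2-element
subset of V). Vertices of K_N are {..<N}; edges are the 2-element subsets.\<close>

definition edge_colorings :: "nat \<Rightarrow> nat \<Rightarrow> (nat set \<Rightarrow> nat) set" where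
  "edge_colorings t N = {c. \<forall>e. e \<subseteq> {..<N} \<and> card e = 2 \<longrightarrow> c e < t}"

text \<open>c contains a (not necessarily induced) copy of (V,E) in K_N whose edges use at most s colors.\<close>
definition has_s_colored_copy :: "nat \<Rightarrow> nat \<Rightarrow> (nat set \<Rightarrow> nat) \<Rightarrow> 'a set \<Rightarrow> 'a set set \<Rightarrow> bool" where
  "has_s_colored_copy s N c V E \<longleftrightarrow>
     (\<exists>f. inj_on f V \<and> f ` V \<subseteq> {..<N} \<and> card ((\<lambda>e. c (f ` e)) ` E) \<le> s)"

definition ramsey_st :: "nat \<Rightarrow> nat \<Rightarrow> 'a set \<Rightarrow> 'a set set \<Rightarrow> nat" where
  "ramsey_st s t V E = (LEAST N. 0 < N \<and> (\<forall>c \<in> edge_colorings t N. has_s_colored_copy s N c V E))"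

definition star_V :: "nat \<Rightarrow> nat set" where "star_V n = {0..n}"
definition star_E :: "nat \<Rightarrow> nat set set" where "star_E n = {{0, i} | i. i \<in> {1..n}}"

end

theory Submission
  imports Defs "HOL-Number_Theory.Number_Theory"
begin

definition kk :: "nat \<Rightarrow> nat \<Rightarrow> nat \<Rightarrow> nat" where
  "kk m a b = (if a = m then (2*b) mod m else if b = m then (2*a) mod m else (a+b) mod m)"

lemma kk_sym: "kk m a b = kk m b a"
  unfolding kk_def by (auto simp: add.commute)

lemma kk_less: "0 < m \<Longrightarrow> kk m a b < m"
  unfolding kk_def by auto

lemma kk_inj:
  assumes "odd m" "v \<le> m" "w1 \<le> m" "w2 \<le> m" "w1 \<noteq> v" "w2 \<noteq> v"
    and "kk m v w1 = kk m v w2"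
  shows "w1 = w2"
proof (cases "v = m")
  case True
  then have "w1 < m" "w2 < m" using assms by auto
  from assms(7) True have "[2*w1 = 2*w2] (mod m)" by (simp add: kk_def cong_def)
  moreover have "coprime 2 m" using assms(1) by simp
  ultimately have "[w1 = w2] (mod m)" using cong_mult_lcancel_nat by blast
  then show ?thesis using \<open>w1 < m\<close> \<open>w2 < m\<close> cong_less_modulus_unique_nat by blast
next
  case False
  then have vm: "v < m" using assms by auto
  have key: "w = v" if "w < m" "(v + w) mod m = (2*v) mod m" for w
  proof -
    have "[v + w = v + v] (mod m)" using that by (simp add: cong_def mult_2)
    then have "[w = v] (mod m)" using cong_add_lcancel_nat by blast
    then show ?thesis using that vm cong_less_modulus_unique_nat by blast
  qed
  have key2: "w1 = w2" if "w1 < m" "w2 < m" "(v + w1) mod m = (v + w2) mod m"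
  proof -
    have "[v + w1 = v + w2] (mod m)" using that by (simp add: cong_def)
    then have "[w1 = w2] (mod m)" using cong_add_lcancel_nat by blast
    then show ?thesis using that cong_less_modulus_unique_nat by blast
  qed
  show ?thesis
  proof (cases "w1 = m"; cases "w2 = m")
    assume "w1 = m" "w2 \<noteq> m"
    then show ?thesis using assms False key[of w2] by (auto simp: kk_def)
  next
    assume "w1 \<noteq> m" "w2 = m"
    then show ?thesis using assms False key[of w1] by (auto simp: kk_def)
  next
    assume "w1 \<noteq> m" "w2 \<noteq> m"
    then show ?thesis using assms False key2 by (auto simp: kk_def)
  qed simp
qed

lemma count_bound:
  assumes "0 < t" "finite C" "K \<subseteq> {..<m}" "\<forall>k\<in>K. k mod t \<in> C"
  shows "card K \<le> (m div t) * card C + card (C \<inter> {..< m mod t})"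
proof -
  let ?q = "m div t" and ?r = "m mod t"
  let ?T = "({..<?q} \<times> C) \<union> ({?q} \<times> (C \<inter> {..<?r}))"
  have inj: "inj_on (\<lambda>k. (k div t, k mod t)) K"
    by (rule inj_onI) (metis div_mod_decomp prod.inject)
  have sub: "(\<lambda>k. (k div t, k mod t)) ` K \<subseteq> ?T"
  proof
    fix x assume "x \<in> (\<lambda>k. (k div t, k mod t)) ` K"
    then obtain k where k: "k \<in> K" "x = (k div t, k mod t)" by auto
    have km: "k < m" using k assms by auto
    have "k div t \<le> ?q" using km div_le_mono by auto
    moreover have "k div t = ?q \<Longrightarrow> k mod t < ?r"
      using km by (metis add_less_cancel_left div_mult_mod_eq)
    ultimately show "x \<in> ?T" using k assms(4) by force
  qed
  have "card K \<le> card ?T"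
    using card_inj_on_le[OF inj sub] assms by auto
  also have "\<dots> \<le> card ({..<?q} \<times> C) + card ({?q} \<times> (C \<inter> {..<?r}))"
    by (rule card_Un_le)
  also have "\<dots> = ?q * card C + card (C \<inter> {..<?r})"
    by (simp add: card_cartesian_product)
  finally show ?thesis .
qed

lemma arith_bound:
  fixes t l n q r s :: nat
  assumes "0 < l" "l < t" "r < t"
    and "int (t-l) * int (q*t + r + 1) \<le> int t*(int n - int l + 1) - int l"
    and "n \<le> q * s + min s r" "s \<le> t - l"
  shows False
proof -
  define S where "S = t - l"
  have tS: "t = S + l" using assms S_def by simp
  have "n \<le> q * S + min S r" using assms(5,6) S_def
    by (meson add_mono_thms_linordered_semiring(1) min.mono mult_le_mono order.refl order_trans)
  then have n: "int n \<le> int q * int S + min (int S) (int r)"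
    by (metis of_nat_le_iff of_nat_mult of_nat_add of_nat_min)
  have h: "int S * (int q * (int S + int l) + int r + 1) \<le> (int S + int l)*(int n - int l + 1) - int l"
  proof -
    have e1: "int (t-l) = int S" using S_def by simp
    have e2: "int t = int S + int l" using tS by simp
    have e3: "int (q*t + r + 1) = int q * (int S + int l) + int r + 1" using e2 by simp
    show ?thesis using assms(4) unfolding e1 e2 e3 .
  qed
  show False
  proof (cases "r \<ge> S")
    case True
    then have "int n \<le> int q * int S + int S" using n by linarith
    then have "(int S + int l) * int n \<le> (int S + int l) * (int q * int S + int S)"
      by (intro mult_left_mono) auto
    moreover have "int S * int S \<le> int S * int r" using True by (intro mult_left_mono) auto
    moreover have "int l * int l > 0" using assms(1) by simp
    ultimately show False using h
      by (simp add: algebra_simps)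
  next
    case False
    then have "int n \<le> int q * int S + int r" using n by linarith
    then have "(int S + int l) * int n \<le> (int S + int l) * (int q * int S + int r)"
      by (intro mult_left_mono) auto
    moreover have "int l * int r < int l * int t" using assms(1,3) by (intro mult_strict_left_mono) auto
    ultimately show False using h tS
      by (simp add: algebra_simps)
  qed
qed

definition col :: "nat \<Rightarrow> nat \<Rightarrow> nat set \<Rightarrow> nat" where
  "col M t e = kk (M - 1) (Min e) (Max e) mod t"

lemma col_pair: "col M t {a, b} = kk (M - 1) a b mod t"
  unfolding col_def by (cases "a \<le> b") (auto simp: min_def max_def kk_sym)

lemma main:
  assumes "even M" "M \<ge> 2" "0 < l" "l < t"
    and "int (t-l) * int M \<le> int t*(int n - int l + 1) - int l"
    and "inj_on f {0..n}" "f ` {0..n} \<subseteq> {..<M}"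
    and "card ((\<lambda>e. col M t (f ` e)) ` star_E n) \<le> t - l"
  shows False
proof -
  define m where "m = M - 1"
  have oddm: "odd m" "0 < m" using assms(1,2) m_def by auto
  define v where "v = f 0"
  define C where "C = (\<lambda>e. col M t (f ` e)) ` star_E n"
  define K where "K = (\<lambda>i. kk m v (f i)) ` {1..n}"
  have fle: "f i \<le> m" if "i \<in> {0..n}" for i using assms(7) that m_def by force
  have fne: "f i \<noteq> v" if "i \<in> {1..n}" for i
    using assms(6) that unfolding v_def inj_on_def by force
  have injK: "inj_on (\<lambda>i. kk m v (f i)) {1..n}"
  proof (rule inj_onI)
    fix i j assume ij: "i \<in> {1..n}" "j \<in> {1..n}" "kk m v (f i) = kk m v (f j)"
    then have "f i = f j" using kk_inj[OF oddm(1), of v "f i" "f j"] fle fne v_def by force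
    then show "i = j" using assms(6) ij unfolding inj_on_def by force
  qed
  have cardK: "card K = n" using card_image[OF injK] K_def by simp
  have finC: "finite C" unfolding C_def star_E_def by simp
  have KC: "\<forall>k\<in>K. k mod t \<in> C"
  proof
    fix k assume "k \<in> K"
    then obtain i where i: "i \<in> {1..n}" "k = kk m v (f i)" using K_def by auto
    have "{0, i} \<in> star_E n" using i unfolding star_E_def by auto
    moreover have "col M t (f ` {0, i}) = k mod t" using i col_pair m_def v_def by simp
    ultimately show "k mod t \<in> C" unfolding C_def by force
  qed
  have Km: "K \<subseteq> {..<m}" using kk_less[OF oddm(2)] K_def by auto
  have t0: "0 < t" using assms by simp
  have "n \<le> (m div t) * card C + card (C \<inter> {..< m mod t})"
    using count_bound[OF t0 finC Km KC] cardK by simp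
  also have "card (C \<inter> {..< m mod t}) \<le> min (card C) (m mod t)"
  proof -
    have "card (C \<inter> {..< m mod t}) \<le> card C" by (rule card_mono[OF finC]) auto
    moreover have "card (C \<inter> {..< m mod t}) \<le> card {..< m mod t}" by (rule card_mono) auto
    ultimately show ?thesis by simp
  qed
  finally have nb: "n \<le> (m div t) * card C + min (card C) (m mod t)" by simp
  have "M = (m div t) * t + m mod t + 1" using m_def assms(2) by simp
  then have ar: "int (t-l) * int ((m div t) * t + m mod t + 1) \<le> int t*(int n - int l + 1) - int l"
    using assms(5) by metis
  show False
    using arith_bound[OF assms(3,4) _ ar nb] t0 assms(8) C_def by simp
qed

lemma existence:
  assumes "0 < t" "0 < n" "1 \<le> s"
  shows "\<exists>N. 0 < N \<and> (\<forall>c \<in> edge_colorings t N. has_s_colored_copy s N c (star_V n) (star_E n))"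
proof (intro exI conjI ballI)
  define N where "N = t * n + 1"
  show "0 < N" using N_def by simp
  fix c assume c: "c \<in> edge_colorings t N"
  define S where "S j = {w \<in> {1..<N}. c {0, w} = j}" for j
  have U: "{1..<N} = (\<Union>j<t. S j)"
  proof
    show "{1..<N} \<subseteq> (\<Union>j<t. S j)"
    proof
      fix w assume w: "w \<in> {1..<N}"
      then have e: "{0, w} \<subseteq> {..<N}" "card {0, w} = 2" using N_def by auto
      then have "c {0, w} < t" using c unfolding edge_colorings_def by blast
      moreover have "w \<in> S (c {0, w})" using w by (simp add: S_def)
      ultimately show "w \<in> (\<Union>j<t. S j)" by blast
    qed
  next
    show "(\<Union>j<t. S j) \<subseteq> {1..<N}" unfolding S_def by blast
  qed
  have "\<exists>j<t. n \<le> card (S j)"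
  proof (rule ccontr)
    assume "\<not> ?thesis"
    then have lt: "\<forall>j<t. card (S j) \<le> n - 1" by auto
    have "t * n = card {1..<N}" using N_def by simp
    also have "\<dots> \<le> (\<Sum>j<t. card (S j))" unfolding U by (rule card_UN_le) simp
    also have "\<dots> \<le> (\<Sum>j<t. n - 1)" by (rule sum_mono) (use lt in auto)
    also have "\<dots> = t * (n - 1)" by simp
    finally show False using assms by simp
  qed
  then obtain j where j: "j < t" "n \<le> card (S j)" by blast
  obtain T where T: "T \<subseteq> S j" "card T = n" "finite T" using obtain_subset_with_card_n[OF j(2)] by blast
  obtain g where g: "bij_betw g {1..n} T" using ex_bij_betw_nat_finite_1[OF T(3)] T(2) by auto
  define f where "f i = (if i = 0 then 0 else g i)" for i
  have gT: "g i \<in> S j" if "i \<in> {1..n}" for i using bij_betw_apply[OF g that] T(1) by blast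
  have g1: "g i \<ge> 1" if "i \<in> {1..n}" for i using gT[OF that] unfolding S_def by simp
  have "inj_on f (star_V n)"
  proof (rule inj_onI)
    fix a b assume ab: "a \<in> star_V n" "b \<in> star_V n" "f a = f b"
    have a': "a \<noteq> 0 \<Longrightarrow> a \<in> {1..n}" "b \<noteq> 0 \<Longrightarrow> b \<in> {1..n}" using ab(1,2) unfolding star_V_def by auto
    have fa: "a \<noteq> 0 \<Longrightarrow> f a = g a" "b \<noteq> 0 \<Longrightarrow> f b = g b" "f 0 = 0" unfolding f_def by auto
    have inj: "inj_on g {1..n}" using g unfolding bij_betw_def by simp
    show "a = b"
    proof (cases "a = 0"; cases "b = 0")
      assume "a = 0" "b \<noteq> 0" then show ?thesis using ab(3) fa g1[OF a'(2)] by simp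
    next
      assume "a \<noteq> 0" "b = 0" then show ?thesis using ab(3) fa g1[OF a'(1)] by simp
    next
      assume "a \<noteq> 0" "b \<noteq> 0" then show ?thesis using ab(3) fa a' inj_onD[OF inj] by metis
    qed simp
  qed
  moreover have "f ` star_V n \<subseteq> {..<N}"
  proof
    fix x assume "x \<in> f ` star_V n"
    then obtain i where i: "i \<in> {0..n}" "x = f i" unfolding star_V_def by auto
    show "x \<in> {..<N}"
    proof (cases "i = 0")
      case True then show ?thesis using i N_def f_def by simp
    next
      case False then have "i \<in> {1..n}" using i by simp
      then show ?thesis using gT[of i] i False unfolding f_def S_def by simp
    qed
  qed
  moreover have "(\<lambda>e. c (f ` e)) ` star_E n \<subseteq> {j}"
  proof
    fix x assume "x \<in> (\<lambda>e. c (f ` e)) ` star_E n"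
    then obtain i where i: "i \<in> {1..n}" "x = c (f ` {0, i})" unfolding star_E_def by auto
    have "f ` {0, i} = {0, g i}" using i(1) unfolding f_def by auto
    then show "x \<in> {j}" using gT[OF i(1)] i(2) unfolding S_def by simp
  qed
  then have "card ((\<lambda>e. c (f ` e)) ` star_E n) \<le> s"
  proof -
    have "card ((\<lambda>e. c (f ` e)) ` star_E n) \<le> card {j}" by (rule card_mono) (use \<open>_ \<subseteq> {j}\<close> in simp_all)
    then show ?thesis using assms(3) by simp
  qed
  ultimately show "has_s_colored_copy s N c (star_V n) (star_E n)"
    unfolding has_s_colored_copy_def by blast
qed

theorem theorem2:
  fixes t l n :: nat and y :: int and \<epsilon> :: int
  assumes "0 < t" and "0 < l" and "0 < n" and "l < t"
    and "y = \<lfloor>real_of_int (int t * (int n - int l + 1) - int l) / real_of_int (int t - int l)\<rfloor>"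
    and "\<epsilon> = (if odd y then 1 else 0)"
  shows "int (ramsey_st (t - l) t (star_V n) (star_E n)) > y - \<epsilon>"
proof -
  define P where "P N = (0 < N \<and> (\<forall>c \<in> edge_colorings t N. has_s_colored_copy (t - l) N c (star_V n) (star_E n)))" for N
  have ex: "\<exists>N. P N" unfolding P_def using existence[OF assms(1,3)] assms(4) by simp
  define R where "R = ramsey_st (t - l) t (star_V n) (star_E n)"
  have PR: "P R" unfolding R_def ramsey_st_def using LeastI_ex[OF ex] unfolding P_def by simp
  show ?thesis
  proof (rule ccontr)
    assume "\<not> ?thesis"
    then have Rle: "int R \<le> y - \<epsilon>" unfolding R_def by simp
    define M where "M = nat (y - \<epsilon>)"
    have R0: "0 < R" using PR P_def by simp
    have RM: "R \<le> M" using Rle R0 M_def by linarith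
    have ev: "even (y - \<epsilon>)" using assms(6) by auto
    have Mint: "int M = y - \<epsilon>" using Rle R0 M_def by linarith
    have evM: "even M" using ev Mint by (metis even_of_nat)
    have M2: "M \<ge> 2" using evM RM R0 by presburger
    have pos: "real_of_int (int t - int l) > 0" using assms(4) by simp
    have "int M \<le> y" using Mint assms(6) by simp
    then have "real_of_int (int M) \<le> real_of_int (int t * (int n - int l + 1) - int l) / real_of_int (int t - int l)"
      using assms(5) le_floor_iff by blast
    then have "real_of_int (int M) * real_of_int (int t - int l) \<le> real_of_int (int t * (int n - int l + 1) - int l)"
      using pos by (simp add: pos_le_divide_eq)
    then have "int M * (int t - int l) \<le> int t * (int n - int l + 1) - int l"
      by (metis of_int_le_iff of_int_mult)
    then have ineq: "int (t - l) * int M \<le> int t * (int n - int l + 1) - int l"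
      using assms(4) by (simp add: of_nat_diff mult.commute)
    have cc: "col M t \<in> edge_colorings t R"
      unfolding edge_colorings_def col_def using assms(1) by simp
    then have "has_s_colored_copy (t - l) R (col M t) (star_V n) (star_E n)"
      using PR P_def by blast
    then obtain f where f: "inj_on f (star_V n)" "f ` star_V n \<subseteq> {..<R}"
      "card ((\<lambda>e. col M t (f ` e)) ` star_E n) \<le> t - l"
      unfolding has_s_colored_copy_def by blast
    have "f ` {0..n} \<subseteq> {..<M}" using f(2) RM unfolding star_V_def by auto
    then show False using main[OF evM M2 assms(2,4) ineq _ _ f(3)] f(1) unfolding star_V_def by blast
  qed
qed

end
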